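(* Let $\sigma$ be any two-qubit density matrix of rank at most $2$. Then there exist single-qubit unitaries $U_A,U_B$ and parameters $\theta,\phi,\alpha\in[0,\pi/2]$, $\beta\in[0,2\pi]$, $\nu_1,\nu_2\in[0,1]$ with $\nu_1+\nu_2=1$ such that $(U_A\otimes U_B)\,\sigma\,(U_A\otimes U_B)^\dagger=\nu_1|\psi_1\rangle\langle\psi_1|+\nu_2|\psi_2\rangle\langle\psi_2|$, where $|\psi_1\rangle=\cos\theta|00\rangle+\sin\theta|11\rangle$ and $|\psi_2\rangle=\cos\phi(\cos\alpha|01\rangle+\sin\alpha|10\rangle)+e^{i\beta}\sin\phi(\sin\theta|00\rangle-\cos\theta|11\rangle)$.
   Context: Qubits are labelled so that the first tensor factor belongs to Alice and the second to Bob; $\{|0\rangle,|1\rangle\}$ is the computational basis and $|ij\rangle=|i\rangle\otimes|j\rangle$. *)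

theory Defs
  imports "Jordan_Normal_Form.Schur_Decomposition" "Jordan_Normal_Form.DL_Rank"
begin

text \<open>Kronecker (tensor) product; the first factor is the most significant index,
  so for 2x2 factors basis index 2*i+j corresponds to |ij> = |i> (x) |j>.\<close>
definition kron :: "complex mat \<Rightarrow> complex mat \<Rightarrow> complex mat" where
  "kron A B = mat (dim_row A * dim_row B) (dim_col A * dim_col B)
     (\<lambda>(i,j). A $$ (i div dim_row B, j div dim_col B) * B $$ (i mod dim_row B, j mod dim_col B))"

definition unitary_mat :: "nat \<Rightarrow> complex mat \<Rightarrow> bool" where
  "unitary_mat n U \<longleftrightarrow> U \<in> carrier_mat n n \<and> mat_adjoint U * U = 1\<^sub>m n"

definition hermitian_mat :: "complex mat \<Rightarrow> bool" where
  "hermitian_mat A \<longleftrightarrow> mat_adjoint A = A"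

definition psd_mat :: "nat \<Rightarrow> complex mat \<Rightarrow> bool" where
  "psd_mat n A \<longleftrightarrow> A \<in> carrier_mat n n \<and> hermitian_mat A \<and>
     (\<forall>v \<in> carrier_vec n. Im (conjugate v \<bullet> (A *\<^sub>v v)) = 0 \<and> Re (conjugate v \<bullet> (A *\<^sub>v v)) \<ge> 0)"

definition mat_trace :: "complex mat \<Rightarrow> complex" where
  "mat_trace A = (\<Sum>i<dim_row A. A $$ (i,i))"

definition density_mat :: "nat \<Rightarrow> complex mat \<Rightarrow> bool" where
  "density_mat n \<rho> \<longleftrightarrow> psd_mat n \<rho> \<and> mat_trace \<rho> = 1"

definition proj :: "complex vec \<Rightarrow> complex mat" where
  "proj v = mat (dim_vec v) (dim_vec v) (\<lambda>(i,j). v $ i * cnj (v $ j))"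

definition ket2 :: "nat \<Rightarrow> nat \<Rightarrow> complex vec" where
  "ket2 i j = unit_vec 4 (2 * i + j)"

end

theory Submission
  imports Defs
begin

lemma adj_dim[simp]: fixes A :: "complex mat" shows "dim_row (mat_adjoint A) = dim_col A" "dim_col (mat_adjoint A) = dim_row A"
  by (auto simp: mat_adjoint_def)

lemma adj_index[simp]: fixes A :: "complex mat" shows "i < dim_col A \<Longrightarrow> j < dim_row A \<Longrightarrow> mat_adjoint A $$ (i,j) = cnj (A $$ (j,i))"
  by (simp add: mat_adjoint_def mat_of_rows_def conjugate_complex_def)

lemma adj_carrier[simp]: fixes A :: "complex mat" shows "A \<in> carrier_mat n m \<Longrightarrow> mat_adjoint A \<in> carrier_mat m n"
  by (intro carrier_matI) (simp_all add: carrier_matD)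

lemma adj_adj[simp]: fixes A :: "complex mat" shows "mat_adjoint (mat_adjoint A) = A"
  by (rule eq_matI) auto

lemma adj_mult: fixes A :: "complex mat" assumes "A \<in> carrier_mat n k" "B \<in> carrier_mat k m"
  shows "mat_adjoint (A*B) = mat_adjoint B * mat_adjoint A"
  by (rule eq_matI) (use assms in \<open>auto simp: scalar_prod_def cnj_sum mult.commute\<close>)

lemma adj_one[simp]: "mat_adjoint (1\<^sub>m n) = (1\<^sub>m n :: complex mat)"
  by (rule eq_matI) auto

lemma adj_zero[simp]: "mat_adjoint (0\<^sub>m n m) = (0\<^sub>m m n :: complex mat)"
  by (rule eq_matI) auto

lemma adj_four_block: fixes A :: "complex mat" assumes "A \<in> carrier_mat n1 m1" "B \<in> carrier_mat n1 m2" "C \<in> carrier_mat n2 m1" "D \<in> carrier_mat n2 m2"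
  shows "mat_adjoint (four_block_mat A B C D) = four_block_mat (mat_adjoint A) (mat_adjoint C) (mat_adjoint B) (mat_adjoint D)"
proof -
  have d: "dim_row A = n1" "dim_col A = m1" "dim_row B = n1" "dim_col B = m2"
    "dim_row C = n2" "dim_col C = m1" "dim_row D = n2" "dim_col D = m2" using assms by auto
  show ?thesis
  proof (rule eq_matI)
    fix i j assume "i < dim_row (four_block_mat (mat_adjoint A) (mat_adjoint C) (mat_adjoint B) (mat_adjoint D))"
      "j < dim_col (four_block_mat (mat_adjoint A) (mat_adjoint C) (mat_adjoint B) (mat_adjoint D))"
    hence i: "i < m1 + m2" and j: "j < n1 + n2" by (auto simp: d)
    have l: "mat_adjoint (four_block_mat A B C D) $$ (i,j) = cnj (four_block_mat A B C D $$ (j,i))"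
      by (rule adj_index) (use i j in \<open>auto simp: d\<close>)
    show "mat_adjoint (four_block_mat A B C D) $$ (i,j) = four_block_mat (mat_adjoint A) (mat_adjoint C) (mat_adjoint B) (mat_adjoint D) $$ (i,j)"
      unfolding l using i j
      by (cases "i < m1"; cases "j < n1") (auto simp: d index_mat_four_block)
  qed (auto simp: d)
qed

lemma eigen_exists: fixes A :: "complex mat" assumes A: "A \<in> carrier_mat n n" and n: "n > 0"
  shows "\<exists>v e. v \<in> carrier_vec n \<and> v \<noteq> 0\<^sub>v n \<and> A *\<^sub>v v = e \<cdot>\<^sub>v v"
proof -
  obtain as where cp: "char_poly A = (\<Prod>a\<leftarrow>as. [:-a,1:])" and len: "length as = n"
    using char_poly_factorized[OF A] by blast
  then obtain a where a: "a \<in> set as" using n by (cases as) auto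
  hence "poly (char_poly A) a = 0" unfolding cp by (auto simp: poly_prod_list_zero_iff)
  hence "eigenvalue A a" using eigenvalue_root_char_poly[OF A] by simp
  then show ?thesis using find_eigenvector[OF A] A unfolding eigenvector_def by blast
qed

definition vnorm2 :: "complex vec \<Rightarrow> real" where "vnorm2 v = (\<Sum>i<dim_vec v. (cmod (v$i))^2)"

lemma cscalar_self: "v \<bullet>c v = complex_of_real (vnorm2 v)"
  unfolding scalar_prod_def vnorm2_def
  by (simp add: atLeast0LessThan conjugate_complex_def flip: complex_norm_square)

lemma unitary_ext: fixes v :: "complex vec" assumes v: "v \<in> carrier_vec n" and v0: "v \<noteq> 0\<^sub>v n"
  shows "\<exists>W c. W \<in> carrier_mat n n \<and> mat_adjoint W * W = 1\<^sub>m n \<and> col W 0 = c \<cdot>\<^sub>v v"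
proof -
  interpret cof_vec_space n "TYPE(complex)" .
  define b where "b = basis_completion v"
  from basis_completion[OF v v0, folded b_def]
  have dist_b: "distinct b" and indep: "\<not> lin_dep (set b)" and b: "set b \<subseteq> carrier_vec n" and hdb: "hd b = v"
    and len_b: "length b = n" by auto
  have n: "n > 0" using v v0 by (cases n) auto
  from hdb len_b n obtain vs where bv: "b = v # vs" by (cases b, auto)
  define ws where "ws = gram_schmidt n b"
  from gram_schmidt_result[OF b dist_b indep refl, folded ws_def]
  have ws: "set ws \<subseteq> carrier_vec n" "corthogonal ws" "length ws = n" 
    by (auto simp: len_b)
  from gram_schmidt_hd[OF v, of vs, folded bv] have hdws: "hd ws = v" unfolding ws_def .
  have ws0: "ws ! 0 = v" using hdws ws(3) n by (cases ws) auto
  define c where "c = (\<lambda>w. 1 / complex_of_real (sqrt (vnorm2 w)))"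
  define W where "W = mat_of_cols n (map (\<lambda>w. c w \<cdot>\<^sub>v w) ws)"
  have Wc: "W \<in> carrier_mat n n" unfolding W_def using ws by auto
  have colW: "col W i = c (ws ! i) \<cdot>\<^sub>v (ws ! i)" if "i < n" for i
    unfolding W_def using that ws by (subst col_mat_of_cols) auto
  have Wk: "W $$ (k,j) = c (ws ! j) * (ws ! j $ k)" if "k < n" "j < n" for k j
  proof -
    have wj: "ws ! j \<in> carrier_vec n" using ws that by auto
    have "W $$ (k,j) = col W j $ k" using Wc that by simp
    also have "\<dots> = c (ws ! j) * (ws ! j $ k)" using colW[OF that(2)] that wj by auto
    finally show ?thesis .
  qed
  have pos: "vnorm2 (ws ! i) > 0" if "i < n" for i
  proof -
    have "ws ! i \<bullet>c ws ! i \<noteq> 0" using corthogonalD[OF ws(2)] that ws(3) by auto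
    moreover have "vnorm2 (ws ! i) \<ge> 0" unfolding vnorm2_def by (auto intro: sum_nonneg)
    ultimately show ?thesis unfolding cscalar_self by auto
  qed
  have "mat_adjoint W * W = 1\<^sub>m n"
  proof (rule eq_matI)
    fix i j assume i: "i < dim_row (1\<^sub>m n)" and j: "j < dim_col (1\<^sub>m n)"
    hence i: "i < n" and j: "j < n" by auto
    have wi: "ws ! i \<in> carrier_vec n" and wj: "ws ! j \<in> carrier_vec n" using ws i j by auto
    have "(mat_adjoint W * W) $$ (i,j) = (\<Sum>k<n. cnj (W $$ (k,i)) * W $$ (k,j))"
      using Wc i j by (simp add: scalar_prod_def atLeast0LessThan)
    also have "\<dots> = (\<Sum>k<n. cnj (c (ws ! i) * (ws ! i $ k)) * (c (ws ! j) * (ws ! j $ k)))"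
      by (rule sum.cong, simp, subst (1 2) Wk) (use i j in auto)
    also have "\<dots> = cnj (c (ws ! i)) * c (ws ! j) * (\<Sum>k<n. ws ! j $ k * cnj (ws ! i $ k))"
      by (simp add: sum_distrib_left algebra_simps)
    also have "(\<Sum>k<n. ws ! j $ k * cnj (ws ! i $ k)) = ws ! j \<bullet>c ws ! i"
      using wi by (simp add: scalar_prod_def atLeast0LessThan conjugate_complex_def)
    finally have eq1: "(mat_adjoint W * W) $$ (i,j) = cnj (c (ws ! i)) * c (ws ! j) * (ws ! j \<bullet>c ws ! i)" .
    have "cnj (c (ws ! i)) * c (ws ! j) * (ws ! j \<bullet>c ws ! i) = 1\<^sub>m n $$ (i,j)"
    proof (cases "i = j")
      case True
      define s where "s = vnorm2 (ws ! i)"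
      have s: "s > 0" using pos[OF i] s_def by simp
      define r where "r = sqrt s"
      have r: "r > 0" "s = r * r" using s unfolding r_def by auto
      have "cnj (c (ws ! i)) * c (ws ! i) * complex_of_real (vnorm2 (ws ! i))
          = (1 / complex_of_real r) * (1 / complex_of_real r) * (complex_of_real r * complex_of_real r)"
        unfolding c_def s_def[symmetric] r_def[symmetric] by (simp add: r(2))
      also have "\<dots> = 1" using r(1) by (simp add: field_simps)
      finally have "cnj (c (ws ! i)) * c (ws ! i) * complex_of_real (vnorm2 (ws ! i)) = 1" by simp
      then show ?thesis using True i by (simp only: cscalar_self index_one_mat simp_thms(6) if_True)
    next
      case False
      then show ?thesis using corthogonalD[OF ws(2)] ws(3) i j by auto
    qed
    then show "(mat_adjoint W * W) $$ (i,j) = 1\<^sub>m n $$ (i,j)" using eq1 by simp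
  qed (use Wc in auto)
  moreover have "col W 0 = c v \<cdot>\<^sub>v v" using colW[OF n] ws0 by simp
  ultimately show ?thesis using Wc by (intro exI[of _ W] exI[of _ "c v"]) simp
qed

lemma mult_sq: "A \<in> carrier_mat n n \<Longrightarrow> B \<in> carrier_mat n n \<Longrightarrow> A * B \<in> carrier_mat n n"
  by (rule mult_carrier_mat)

lemma spectral: fixes A :: "complex mat"
  shows "A \<in> carrier_mat n n \<Longrightarrow> mat_adjoint A = A \<Longrightarrow>
    \<exists>U D. U \<in> carrier_mat n n \<and> D \<in> carrier_mat n n \<and> mat_adjoint U * U = 1\<^sub>m n \<and>
      diagonal_mat D \<and> A = U * D * mat_adjoint U"
proof (induction n arbitrary: A)
  case 0
  then show ?case
    by (intro exI[of _ "1\<^sub>m 0"] exI[of _ "0\<^sub>m 0 0"]) (auto simp: diagonal_mat_def intro!: eq_matI)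
next
  case (Suc m)
  note A = Suc.prems(1) and herm = Suc.prems(2)
  obtain v e where v: "v \<in> carrier_vec (Suc m)" "v \<noteq> 0\<^sub>v (Suc m)" and ev: "A *\<^sub>v v = e \<cdot>\<^sub>v v"
    using eigen_exists[OF A] by blast
  obtain W c where W: "W \<in> carrier_mat (Suc m) (Suc m)" and WW: "mat_adjoint W * W = 1\<^sub>m (Suc m)"
    and cW: "col W 0 = c \<cdot>\<^sub>v v"
    using unitary_ext[OF v] by blast
  have aW0: "mat_adjoint W \<in> carrier_mat (Suc m) (Suc m)" using W by auto
  have WW': "W * mat_adjoint W = 1\<^sub>m (Suc m)"
    using mat_mult_left_right_inverse[OF adj_carrier[OF W] W WW] .
  have evW: "A *\<^sub>v col W 0 = e \<cdot>\<^sub>v col W 0"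
    unfolding cW using A v ev by (simp add: mult_mat_vec smult_smult_assoc mult.commute)
  define A' where "A' = mat_adjoint W * A * W"
  have A'c: "A' \<in> carrier_mat (Suc m) (Suc m)" unfolding A'_def using W A by auto
  have A'h: "mat_adjoint A' = A'"
    unfolding A'_def using W A herm
    by (simp add: adj_mult[of _ "Suc m" "Suc m" _ "Suc m"] assoc_mult_mat[of _ "Suc m" "Suc m" _ "Suc m" _ "Suc m"])
  have col0: "A' $$ (i,0) = (if i = 0 then e else 0)" if i: "i < Suc m" for i
  proof -
    have "A' $$ (i,0) = (mat_adjoint W * (A * W)) $$ (i,0)"
      unfolding A'_def using W A by (simp add: assoc_mult_mat[of _ "Suc m" "Suc m" _ "Suc m" _ "Suc m"] mult_sq)
    also have "\<dots> = row (mat_adjoint W) i \<bullet> col (A * W) 0" using W A i by simp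
    also have "col (A * W) 0 = A *\<^sub>v col W 0" by (rule col_mult2[OF A W]) simp
    also have "row (mat_adjoint W) i \<bullet> (A *\<^sub>v col W 0) = e * (row (mat_adjoint W) i \<bullet> col W 0)"
      unfolding evW using W i by simp
    also have "row (mat_adjoint W) i \<bullet> col W 0 = (mat_adjoint W * W) $$ (i,0)" using W i by simp
    also have "\<dots> = (if i = 0 then 1 else 0)" unfolding WW using i by simp
    finally show ?thesis by simp
  qed
  have row0: "A' $$ (0,j) = 0" if j: "0 < j" "j < Suc m" for j
  proof -
    have "A' $$ (0,j) = mat_adjoint A' $$ (0,j)" using A'h by simp
    also have "\<dots> = cnj (A' $$ (j,0))" using A'c j by simp
    finally show ?thesis using col0[OF j(2)] j by simp
  qed
  obtain A1 A2 A0 A3 where sb: "split_block A' 1 1 = (A1,A2,A0,A3)"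
    by (cases "split_block A' 1 1") auto
  have dA': "dim_row A' = 1 + m" "dim_col A' = 1 + m" using A'c by auto
  note spl = split_block[OF sb dA']
  have A1d: "A1 = mat 1 1 (\<lambda>_. e)"
    using sb A'c col0 unfolding split_block_def Let_def by (auto intro!: eq_matI)
  have A2d: "A2 = 0\<^sub>m 1 m"
    using sb A'c row0 unfolding split_block_def Let_def by (auto intro!: eq_matI)
  have A0d: "A0 = 0\<^sub>m m 1"
    using sb A'c col0 unfolding split_block_def Let_def by (auto intro!: eq_matI)
  have A3d: "A3 = mat m m (\<lambda>(i,j). A' $$ (i+1, j+1))"
    using sb A'c unfolding split_block_def Let_def by auto
  have A3c: "A3 \<in> carrier_mat m m" using spl by simp
  have A3h: "mat_adjoint A3 = A3"
  proof (rule eq_matI)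
    fix i j assume "i < dim_row A3" "j < dim_col A3"
    hence i: "i < m" and j: "j < m" using A3c by auto
    have "cnj (A' $$ (j+1, i+1)) = mat_adjoint A' $$ (i+1, j+1)" using A'c i j by simp
    also have "\<dots> = A' $$ (i+1, j+1)" using A'h by simp
    finally show "mat_adjoint A3 $$ (i,j) = A3 $$ (i,j)" using i j A3c unfolding A3d by simp
  qed (use A3c in auto)
  obtain U3 D3 where U3: "U3 \<in> carrier_mat m m" and D3: "D3 \<in> carrier_mat m m"
    and UU3: "mat_adjoint U3 * U3 = 1\<^sub>m m" and dD3: "diagonal_mat D3" and A3e: "A3 = U3 * D3 * mat_adjoint U3"
    using Suc.IH[OF A3c A3h] by blast
  define B where "B = four_block_mat (1\<^sub>m 1) (0\<^sub>m 1 m) (0\<^sub>m m 1) U3"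
  define D where "D = four_block_mat A1 (0\<^sub>m 1 m) (0\<^sub>m m 1) D3"
  have A1c: "A1 \<in> carrier_mat 1 1" unfolding A1d by simp
  have Bc: "B \<in> carrier_mat (Suc m) (Suc m)" unfolding B_def using U3 by auto
  have Dc: "D \<in> carrier_mat (Suc m) (Suc m)" unfolding D_def using D3 A1c by auto
  have adjB: "mat_adjoint B = four_block_mat (1\<^sub>m 1) (0\<^sub>m 1 m) (0\<^sub>m m 1) (mat_adjoint U3)"
    unfolding B_def by (subst adj_four_block[of _ 1 1 _ m _ m _]) (use U3 in auto)
  have BB0: "four_block_mat (1\<^sub>m 1) (0\<^sub>m 1 m) (0\<^sub>m m 1) (mat_adjoint U3) * four_block_mat (1\<^sub>m 1) (0\<^sub>m 1 m) (0\<^sub>m m 1) U3 = 1\<^sub>m (Suc m)"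
    by (subst mult_four_block_mat[of _ 1 1 _ m _ m _ _ 1 _ m]) (use U3 UU3 in \<open>auto simp: four_block_one_mat[of 1 m, simplified]\<close>)
  have BB: "mat_adjoint B * B = 1\<^sub>m (Suc m)" using BB0 unfolding adjB by (simp add: B_def)
  have BD: "B * D = four_block_mat A1 (0\<^sub>m 1 m) (0\<^sub>m m 1) (U3 * D3)"
    unfolding B_def D_def
    by (subst mult_four_block_mat[of _ 1 1 _ m _ m _ _ 1 _ m]) (use U3 D3 A1c in auto)
  have BDB: "B * D * mat_adjoint B = A'"
    unfolding BD adjB
    by (subst mult_four_block_mat[of _ 1 1 _ m _ m _ _ 1 _ m])
       (use U3 D3 A1c spl in \<open>auto simp: A3e A2d A0d\<close>)
  define U where "U = W * B"
  have Uc: "U \<in> carrier_mat (Suc m) (Suc m)" unfolding U_def using W Bc by auto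
  have adjU: "mat_adjoint U = mat_adjoint B * mat_adjoint W"
    unfolding U_def by (rule adj_mult[OF W Bc])
  have UU: "mat_adjoint U * U = 1\<^sub>m (Suc m)"
  proof -
    have aW: "mat_adjoint W \<in> carrier_mat (Suc m) (Suc m)" and aB: "mat_adjoint B \<in> carrier_mat (Suc m) (Suc m)"
      using W Bc by auto
    have "mat_adjoint U * U = mat_adjoint B * mat_adjoint W * (W * B)"
      unfolding U_def adj_mult[OF W Bc] ..
    also have "\<dots> = mat_adjoint B * (mat_adjoint W * (W * B))"
      by (rule assoc_mult_mat[OF aB aW mult_carrier_mat[OF W Bc]])
    also have "mat_adjoint W * (W * B) = (mat_adjoint W * W) * B"
      by (rule assoc_mult_mat[OF aW W Bc, symmetric])
    also have "mat_adjoint B * (mat_adjoint W * W * B) = mat_adjoint B * (mat_adjoint W * W) * B"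
      by (rule assoc_mult_mat[OF aB mult_carrier_mat[OF aW W] Bc, symmetric])
    also have "\<dots> = 1\<^sub>m (Suc m)" unfolding WW using Bc BB by simp
    finally show ?thesis .
  qed
  have AU: "A = U * D * mat_adjoint U"
  proof -
    have "A = (W * mat_adjoint W) * A * (W * mat_adjoint W)" unfolding WW' using A by simp
    also have "\<dots> = W * A' * mat_adjoint W" unfolding A'_def using W A aW0
      by (simp add: assoc_mult_mat[of _ "Suc m" "Suc m" _ "Suc m" _ "Suc m"] mult_sq)
    also have "\<dots> = W * (B * D * mat_adjoint B) * mat_adjoint W" unfolding BDB ..
    also have "\<dots> = U * D * mat_adjoint U" unfolding U_def adj_mult[OF W Bc] using W Bc Dc aW0 adj_carrier[OF Bc]
      by (simp add: assoc_mult_mat[of _ "Suc m" "Suc m" _ "Suc m" _ "Suc m"] mult_sq)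
    finally show ?thesis .
  qed
  have dD: "diagonal_mat D"
    unfolding diagonal_mat_def D_def using dD3 D3 A1c
    by (auto simp: index_mat_four_block diagonal_mat_def)
  show ?case using Uc Dc UU dD AU by blast
qed

lemma less4: "(k::nat) < 4 \<longleftrightarrow> k = 0 \<or> k = 1 \<or> k = 2 \<or> k = 3" by auto

lemma choose2: "(k1::nat) < 4 \<Longrightarrow> k2 < 4 \<Longrightarrow> k1 \<noteq> k2 \<Longrightarrow>
   \<exists>i j. i < 4 \<and> j < 4 \<and> i \<noteq> j \<and> (\<forall>k<4. k = i \<or> k = j \<or> k = k1 \<or> k = k2)"
  apply (rule exI[of _ "if k1 \<noteq> 0 \<and> k2 \<noteq> 0 then 0 else if k1 \<noteq> 1 \<and> k2 \<noteq> 1 then 1 else 2"])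
  apply (rule exI[of _ "if k1 \<noteq> 3 \<and> k2 \<noteq> 3 then 3 else if k1 \<noteq> 2 \<and> k2 \<noteq> 2 then 2 else 1"])
  unfolding less4 by auto

lemma UDU_entry: fixes U D :: "complex mat"
  assumes U: "U \<in> carrier_mat n n" and D: "D \<in> carrier_mat n n" and dD: "diagonal_mat D"
    and a: "a < n" and b: "b < n"
  shows "(U * D * mat_adjoint U) $$ (a,b) = (\<Sum>k<n. U $$ (a,k) * D $$ (k,k) * cnj (U $$ (b,k)))"
proof -
  have UD: "(U * D) $$ (a,l) = U $$ (a,l) * D $$ (l,l)" if l: "l < n" for l
  proof -
    have "(U * D) $$ (a,l) = (\<Sum>k<n. U $$ (a,k) * D $$ (k,l))"
      using U D a l by (simp add: scalar_prod_def atLeast0LessThan)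
    also have "\<dots> = (\<Sum>k<n. if k = l then U $$ (a,l) * D $$ (l,l) else 0)"
      by (rule sum.cong) (use dD D l in \<open>auto simp: diagonal_mat_def\<close>)
    also have "\<dots> = U $$ (a,l) * D $$ (l,l)" using l by simp
    finally show ?thesis .
  qed
  have "(U * D * mat_adjoint U) $$ (a,b) = (\<Sum>l<n. (U * D) $$ (a,l) * cnj (U $$ (b,l)))"
    using U D a b by (simp add: scalar_prod_def atLeast0LessThan)
  also have "\<dots> = (\<Sum>k<n. U $$ (a,k) * D $$ (k,k) * cnj (U $$ (b,k)))"
    by (rule sum.cong) (auto simp: UD)
  finally show ?thesis .
qed

lemma proj_dim[simp]: "dim_row (proj v) = dim_vec v" "dim_col (proj v) = dim_vec v"
  by (auto simp: proj_def)

lemma proj_index[simp]: "a < dim_vec v \<Longrightarrow> b < dim_vec v \<Longrightarrow> proj v $$ (a,b) = v $ a * cnj (v $ b)"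
  by (simp add: proj_def)

lemma proj_carrier[simp]: "v \<in> carrier_vec n \<Longrightarrow> proj v \<in> carrier_mat n n"
  by (intro carrier_matI) auto

lemma row_adj: fixes U :: "complex mat" shows "k < dim_col U \<Longrightarrow> row (mat_adjoint U) k = conjugate (col U k)"
  by (rule eq_vecI) auto

lemma rank2_decomp:
  fixes \<sigma> :: "complex mat"
  assumes dm: "density_mat 4 \<sigma>" and rk: "vec_space.rank 4 \<sigma> \<le> 2"
  shows "\<exists>v1 v2 (\<nu>1::real) \<nu>2. v1 \<in> carrier_vec 4 \<and> v2 \<in> carrier_vec 4 \<and> v1 \<bullet>c v1 = 1 \<and> v2 \<bullet>c v2 = 1 \<and>
     v2 \<bullet>c v1 = 0 \<and> \<nu>1 \<ge> 0 \<and> \<nu>2 \<ge> 0 \<and> \<nu>1 + \<nu>2 = 1 \<and>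
     \<sigma> = complex_of_real \<nu>1 \<cdot>\<^sub>m proj v1 + complex_of_real \<nu>2 \<cdot>\<^sub>m proj v2"
proof -
  have \<sigma>c: "\<sigma> \<in> carrier_mat 4 4" and herm: "mat_adjoint \<sigma> = \<sigma>"
    and psd: "\<And>v. v \<in> carrier_vec 4 \<Longrightarrow> Im (conjugate v \<bullet> (\<sigma> *\<^sub>v v)) = 0 \<and> Re (conjugate v \<bullet> (\<sigma> *\<^sub>v v)) \<ge> 0"
    and tr: "mat_trace \<sigma> = 1"
    using dm unfolding density_mat_def psd_mat_def hermitian_mat_def by auto
  obtain U D where U: "U \<in> carrier_mat 4 4" and D: "D \<in> carrier_mat 4 4" and UU: "mat_adjoint U * U = 1\<^sub>m 4"
    and dD: "diagonal_mat D" and \<sigma>e: "\<sigma> = U * D * mat_adjoint U"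
    using spectral[OF \<sigma>c herm] by blast
  have aU: "mat_adjoint U \<in> carrier_mat 4 4" using U by simp
  have UU': "U * mat_adjoint U = 1\<^sub>m 4" using mat_mult_left_right_inverse[OF aU U UU] .
  define d where "d k = D $$ (k,k)" for k
  define u where "u k = col U k" for k
  have uc: "u k \<in> carrier_vec 4" for k using U unfolding u_def by (metis carrier_matD(1) col_dim)
  have \<sigma>ent: "\<sigma> $$ (a,b) = (\<Sum>k<4. U $$ (a,k) * d k * cnj (U $$ (b,k)))" if "a<4" "b<4" for a b
    using UDU_entry[OF U D dD that] \<sigma>e d_def by simp
  have uent: "u k $ a = U $$ (a,k)" if "a < 4" "k < 4" for a k
    using U that unfolding u_def by simp
  have orth: "u j \<bullet>c u i = (if i = j then 1 else 0)" if "i<4" "j<4" for i j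
  proof -
    have "(mat_adjoint U * U) $$ (i,j) = (\<Sum>k<4. cnj (U $$ (k,i)) * U $$ (k,j))"
      using U that by (simp add: scalar_prod_def atLeast0LessThan)
    moreover have "u j \<bullet>c u i = (\<Sum>k<4. U $$ (k,j) * cnj (U $$ (k,i)))"
      using U that unfolding u_def by (simp add: scalar_prod_def atLeast0LessThan conjugate_complex_def)
    ultimately show ?thesis using UU that by (simp add: mult.commute)
  qed
  have dD': "mat_adjoint U * \<sigma> * U = D"
  proof -
    have "mat_adjoint U * \<sigma> * U = (mat_adjoint U * U) * D * (mat_adjoint U * U)"
      unfolding \<sigma>e using U D aU by (simp add: assoc_mult_mat[of _ 4 4 _ 4 _ 4] mult_sq)
    also have "\<dots> = D" unfolding UU using D by simp
    finally show ?thesis .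
  qed
  have dreal: "Im (d k) = 0 \<and> Re (d k) \<ge> 0" if k: "k<4" for k
  proof -
    have "d k = (mat_adjoint U * \<sigma> * U) $$ (k,k)" using dD' d_def by simp
    also have "\<dots> = ((mat_adjoint U * \<sigma>) *\<^sub>v col U k) $ k" using U \<sigma>c k by simp
    also have "(mat_adjoint U * \<sigma>) *\<^sub>v col U k = mat_adjoint U *\<^sub>v (\<sigma> *\<^sub>v col U k)"
      using U \<sigma>c aU uc[of k] unfolding u_def by (intro assoc_mult_mat_vec) auto
    also have "(mat_adjoint U *\<^sub>v (\<sigma> *\<^sub>v col U k)) $ k = row (mat_adjoint U) k \<bullet> (\<sigma> *\<^sub>v col U k)"
      using U k by simp
    also have "row (mat_adjoint U) k = conjugate (u k)" unfolding u_def using U k by (simp add: row_adj)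
    finally have "d k = conjugate (u k) \<bullet> (\<sigma> *\<^sub>v u k)" unfolding u_def .
    then show ?thesis using psd[OF uc] by simp
  qed
  have dR: "d k = complex_of_real (Re (d k))" if "k<4" for k
    using dreal[OF that] by (simp add: complex_eq_iff)
  have detU: "det U \<noteq> 0"
  proof
    assume "det U = 0"
    hence "det (mat_adjoint U * U) = 0" using det_mult[OF aU U] by simp
    thus False unfolding UU by simp
  qed
  have detaU: "det (mat_adjoint U) \<noteq> 0"
  proof
    assume "det (mat_adjoint U) = 0"
    hence "det (mat_adjoint U * U) = 0" using det_mult[OF aU U] by simp
    thus False unfolding UU by simp
  qed
  have notthree: "\<not> (\<exists>e<4. \<forall>k<4. k \<noteq> e \<longrightarrow> d k \<noteq> 0)"
  proof
    assume "\<exists>e<4. \<forall>k<4. k \<noteq> e \<longrightarrow> d k \<noteq> 0"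
    then obtain e where e: "e < 4" and nz: "\<And>k. k < 4 \<Longrightarrow> k \<noteq> e \<Longrightarrow> d k \<noteq> 0" by blast
    define D' where "D' = mat 4 4 (\<lambda>(i,j). if i = j then d i + (if i = e then 1 else 0) else (0::complex))"
    have D'c: "D' \<in> carrier_mat 4 4" unfolding D'_def by simp
    have dD'': "diagonal_mat D'" unfolding D'_def diagonal_mat_def by simp
    have M: "\<sigma> + proj (u e) = U * D' * mat_adjoint U"
    proof (rule eq_matI)
      fix a b assume "a < dim_row (U * D' * mat_adjoint U)" "b < dim_col (U * D' * mat_adjoint U)"
      hence a: "a < 4" and b: "b < 4" using U by auto
      have "(U * D' * mat_adjoint U) $$ (a,b) = (\<Sum>k<4. U $$ (a,k) * D' $$ (k,k) * cnj (U $$ (b,k)))"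
        by (rule UDU_entry[OF U D'c dD'' a b])
      also have "\<dots> = (\<Sum>k<4. U $$ (a,k) * d k * cnj (U $$ (b,k)) + (if k = e then U $$ (a,e) * cnj (U $$ (b,e)) else 0))"
        by (rule sum.cong) (auto simp: D'_def algebra_simps)
      also have "\<dots> = \<sigma> $$ (a,b) + U $$ (a,e) * cnj (U $$ (b,e))"
        using e by (simp add: sum.distrib \<sigma>ent[OF a b])
      also have "\<dots> = (\<sigma> + proj (u e)) $$ (a,b)"
        using a b \<sigma>c uc[of e] uent[OF a e] uent[OF b e] by simp
      finally show "(\<sigma> + proj (u e)) $$ (a,b) = (U * D' * mat_adjoint U) $$ (a,b)" by simp
    qed (use U \<sigma>c uc in auto)
    have detD': "det D' \<noteq> 0"
    proof -
      have ut: "upper_triangular D'" unfolding D'_def upper_triangular_def by auto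
      have "det D' = prod_list (diag_mat D')" by (rule det_upper_triangular[OF ut D'c])
      moreover have "0 \<notin> set (diag_mat D')"
      proof
        assume "0 \<in> set (diag_mat D')"
        then obtain k where k: "k < 4" and z: "D' $$ (k,k) = 0" unfolding diag_mat_def using D'c by auto
        show False
        proof (cases "k = e")
          case True
          hence "d k + 1 = 0" using z k unfolding D'_def by simp
          hence "Re (d k) + 1 = 0" by (metis one_complex.simps(1) plus_complex.simps(1) zero_complex.simps(1))
          thus False using dreal[OF k] by simp
        next
          case False
          thus False using z k nz[OF k] unfolding D'_def by simp
        qed
      qed
      ultimately show ?thesis by (simp add: prod_list_zero_iff)
    qed
    have "det (\<sigma> + proj (u e)) \<noteq> 0"
      unfolding M using det_mult[OF mult_sq[OF U D'c] aU] det_mult[OF U D'c] detU detD' detaU by simp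
    interpret vec_space "TYPE(complex)" 4 .
    have Mc: "\<sigma> + proj (u e) \<in> carrier_mat 4 4" using \<sigma>c uc by simp
    have r4: "rank (\<sigma> + proj (u e)) = 4"
      by (rule low_rank_det_zero[OF Mc]) fact
    have "rank (\<sigma> + proj (u e)) \<le> rank \<sigma> + rank (proj (u e))"
      by (rule rank_subadditive[OF \<sigma>c]) (use uc in simp)
    moreover have "rank (proj (u e)) \<le> 1"
      by (rule rank_le_1_product_entries[where f = "\<lambda>r. u e $ r" and g = "\<lambda>c. cnj (u e $ c)"]) (use uc in auto)
    ultimately show False using rk r4 by simp
  qed
  have "\<not> (\<forall>k<4. k \<noteq> 0 \<longrightarrow> d k \<noteq> 0)" using notthree zero_less_numeral[where 'a=nat] by blast
  then obtain k1 where k1: "k1 < 4" "d k1 = 0" by blast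
  have "\<not> (\<forall>k<4. k \<noteq> k1 \<longrightarrow> d k \<noteq> 0)" using notthree k1(1) by blast
  then obtain k2 where k2: "k2 < 4" "k2 \<noteq> k1" "d k2 = 0" by blast
  obtain i j where ij: "i < 4" "j < 4" "i \<noteq> j" and rest: "\<And>k. k < 4 \<Longrightarrow> k = i \<or> k = j \<or> k = k1 \<or> k = k2"
    using choose2[OF k1(1) k2(1) k2(2)[symmetric]] by blast
  have zero: "d k = 0" if "k < 4" "k \<noteq> i" "k \<noteq> j" for k
    using rest[OF that(1)] that k1 k2 by auto
  have sum2: "(\<Sum>k<4. f k) = f i + f j" if "\<And>k. k < 4 \<Longrightarrow> k \<noteq> i \<Longrightarrow> k \<noteq> j \<Longrightarrow> f k = 0" for f :: "nat \<Rightarrow> complex"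
  proof -
    have "(\<Sum>k<4. f k) = (\<Sum>k\<in>{i,j}. f k)"
      by (rule sum.mono_neutral_right) (use ij that in auto)
    also have "\<dots> = f i + f j" using ij by simp
    finally show ?thesis .
  qed
  define \<nu>1 where "\<nu>1 = Re (d i)"
  define \<nu>2 where "\<nu>2 = Re (d j)"
  have trace: "d i + d j = 1"
  proof -
    have "mat_trace \<sigma> = (\<Sum>a<4. \<sigma> $$ (a,a))" unfolding mat_trace_def using \<sigma>c by simp
    also have "\<dots> = (\<Sum>a<4. \<Sum>k<4. d k * (U $$ (a,k) * cnj (U $$ (a,k))))"
      by (rule sum.cong) (auto simp: \<sigma>ent algebra_simps)
    also have "\<dots> = (\<Sum>k<4. \<Sum>a<4. d k * (U $$ (a,k) * cnj (U $$ (a,k))))"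
      by (rule sum.swap)
    also have "\<dots> = (\<Sum>k<4. d k * (\<Sum>a<4. U $$ (a,k) * cnj (U $$ (a,k))))"
      by (simp add: sum_distrib_left)
    also have "\<dots> = (\<Sum>k<4. d k)"
    proof (rule sum.cong)
      fix k :: nat assume "k \<in> {..<4}"
      hence k: "k < 4" by simp
      have "(\<Sum>a<4. U $$ (a,k) * cnj (U $$ (a,k))) = u k \<bullet>c u k"
        using uc[of k] uent k by (simp add: scalar_prod_def atLeast0LessThan conjugate_complex_def)
      thus "d k * (\<Sum>a<4. U $$ (a,k) * cnj (U $$ (a,k))) = d k" using orth[OF k k] by simp
    qed simp
    also have "\<dots> = d i + d j" by (rule sum2) (use zero in auto)
    finally show ?thesis using tr by simp
  qed
  have "\<sigma> = complex_of_real \<nu>1 \<cdot>\<^sub>m proj (u i) + complex_of_real \<nu>2 \<cdot>\<^sub>m proj (u j)"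
  proof (rule eq_matI)
    fix a b assume "a < dim_row (complex_of_real \<nu>1 \<cdot>\<^sub>m proj (u i) + complex_of_real \<nu>2 \<cdot>\<^sub>m proj (u j))"
      "b < dim_col (complex_of_real \<nu>1 \<cdot>\<^sub>m proj (u i) + complex_of_real \<nu>2 \<cdot>\<^sub>m proj (u j))"
    hence a: "a < 4" and b: "b < 4" using uc[of j] by auto
    have "\<sigma> $$ (a,b) = U $$ (a,i) * d i * cnj (U $$ (b,i)) + U $$ (a,j) * d j * cnj (U $$ (b,j))"
      unfolding \<sigma>ent[OF a b] by (rule sum2) (use zero in auto)
    also have "\<dots> = (complex_of_real \<nu>1 \<cdot>\<^sub>m proj (u i) + complex_of_real \<nu>2 \<cdot>\<^sub>m proj (u j)) $$ (a,b)"
      using a b uc[of i] uc[of j] uent[OF a ij(1)] uent[OF b ij(1)] uent[OF a ij(2)] uent[OF b ij(2)]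
        dR[OF ij(1)] dR[OF ij(2)] unfolding \<nu>1_def \<nu>2_def by (simp add: algebra_simps)
    finally show "\<sigma> $$ (a,b) = \<dots>" .
  qed (use \<sigma>c uc in auto)
  moreover have "\<nu>1 + \<nu>2 = 1" unfolding \<nu>1_def \<nu>2_def using arg_cong[OF trace, of Re] by simp
  moreover have "\<nu>1 \<ge> 0" "\<nu>2 \<ge> 0" unfolding \<nu>1_def \<nu>2_def using dreal ij by auto
  moreover have "u i \<bullet>c u i = 1" "u j \<bullet>c u j = 1" "u j \<bullet>c u i = 0" using orth ij by auto
  ultimately show ?thesis using uc by blast
qed

lemma sum2: "(\<Sum>k<2. f k) = f 0 + f (1::nat)"
  by (simp add: eval_nat_numeral)
lemma sum4: "(\<Sum>k<4. f k) = f 0 + f 1 + f 2 + f (3::nat)"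
  by (simp add: eval_nat_numeral)
lemma sum2': "(\<Sum>k\<in>{0..<2}. f k) = f 0 + f (1::nat)"
  by (simp add: eval_nat_numeral)
lemma sum4': "(\<Sum>k\<in>{0..<4}. f k) = f 0 + f 1 + f 2 + f (3::nat)"
  by (simp add: eval_nat_numeral)
lemma less2: "(k::nat) < 2 \<longleftrightarrow> k = 0 \<or> k = 1" by auto

lemma cscalar_sum: "v \<bullet>c w = (\<Sum>k<dim_vec w. v $ k * cnj (w $ k))"
  by (simp add: scalar_prod_def atLeast0LessThan conjugate_complex_def)

lemma mult_mat_vec_index': "A \<in> carrier_mat n m \<Longrightarrow> v \<in> carrier_vec m \<Longrightarrow> i < n \<Longrightarrow>
    (A *\<^sub>v v) $ i = (\<Sum>k<m. A $$ (i,k) * v $ k)"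
  by (simp add: scalar_prod_def atLeast0LessThan)

lemma conj_proj: fixes W :: "complex mat"
  assumes W: "W \<in> carrier_mat n n" and v: "v \<in> carrier_vec n"
  shows "W * proj v * mat_adjoint W = proj (W *\<^sub>v v)"
proof (rule eq_matI)
  fix a b assume "a < dim_row (proj (W *\<^sub>v v))" "b < dim_col (proj (W *\<^sub>v v))"
  hence a: "a < n" and b: "b < n" using W by auto
  have WP: "(W * proj v) $$ (a,l) = (W *\<^sub>v v) $ a * cnj (v $ l)" if l: "l < n" for l
  proof -
    have "(W * proj v) $$ (a,l) = (\<Sum>k<n. W $$ (a,k) * (v $ k * cnj (v $ l)))"
      using W v a l by (simp add: scalar_prod_def atLeast0LessThan)
    also have "\<dots> = (\<Sum>k<n. W $$ (a,k) * v $ k) * cnj (v $ l)"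
      by (simp add: sum_distrib_right mult.assoc)
    finally show ?thesis using mult_mat_vec_index'[OF W v a] by simp
  qed
  have "(W * proj v * mat_adjoint W) $$ (a,b) = (\<Sum>l<n. (W * proj v) $$ (a,l) * cnj (W $$ (b,l)))"
    using W v a b by (simp add: scalar_prod_def atLeast0LessThan)
  also have "\<dots> = (\<Sum>l<n. (W *\<^sub>v v) $ a * (cnj (v $ l) * cnj (W $$ (b,l))))"
    by (rule sum.cong) (auto simp: WP)
  also have "\<dots> = (W *\<^sub>v v) $ a * cnj (\<Sum>l<n. W $$ (b,l) * v $ l)"
    by (simp add: sum_distrib_left mult.commute)
  also have "\<dots> = proj (W *\<^sub>v v) $$ (a,b)"
    using mult_mat_vec_index'[OF W v b] a b W by simp
  finally show "(W * proj v * mat_adjoint W) $$ (a,b) = proj (W *\<^sub>v v) $$ (a,b)" .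
qed (use W in auto)

lemma proj_smult: "proj (c \<cdot>\<^sub>v v) = (c * cnj c) \<cdot>\<^sub>m proj v"
  by (rule eq_matI) (auto simp: proj_def)

lemma unitary_inner: fixes W :: "complex mat"
  assumes W: "W \<in> carrier_mat n n" and WW: "mat_adjoint W * W = 1\<^sub>m n"
    and a: "a \<in> carrier_vec n" and b: "b \<in> carrier_vec n"
  shows "(W *\<^sub>v a) \<bullet>c (W *\<^sub>v b) = a \<bullet>c b"
proof -
  have I: "(\<Sum>i<n. W $$ (i,k) * cnj (W $$ (i,l))) = (if l = k then 1 else 0)" if "k < n" "l < n" for k l
  proof -
    have "(mat_adjoint W * W) $$ (l,k) = (\<Sum>i<n. cnj (W $$ (i,l)) * W $$ (i,k))"
      using W that by (simp add: scalar_prod_def atLeast0LessThan)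
    thus ?thesis using WW that by (simp add: mult.commute)
  qed
  have "(W *\<^sub>v a) \<bullet>c (W *\<^sub>v b) = (\<Sum>i<n. (\<Sum>k<n. W $$ (i,k) * a $ k) * cnj (\<Sum>l<n. W $$ (i,l) * b $ l))"
    unfolding cscalar_sum using W a b by (simp add: mult_mat_vec_index' del: index_mult_mat_vec)
  also have "\<dots> = (\<Sum>i<n. \<Sum>l<n. \<Sum>k<n. a $ k * (cnj (b $ l) * (W $$ (i,k) * cnj (W $$ (i,l)))))"
    by (simp add: sum_distrib_left sum_distrib_right algebra_simps)
  also have "\<dots> = (\<Sum>l<n. \<Sum>k<n. \<Sum>i<n. a $ k * (cnj (b $ l) * (W $$ (i,k) * cnj (W $$ (i,l)))))"
  proof -
    have "(\<Sum>i<n. \<Sum>l<n. \<Sum>k<n. a $ k * (cnj (b $ l) * (W $$ (i,k) * cnj (W $$ (i,l)))))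
        = (\<Sum>l<n. \<Sum>i<n. \<Sum>k<n. a $ k * (cnj (b $ l) * (W $$ (i,k) * cnj (W $$ (i,l)))))"
      by (rule sum.swap)
    also have "\<dots> = (\<Sum>l<n. \<Sum>k<n. \<Sum>i<n. a $ k * (cnj (b $ l) * (W $$ (i,k) * cnj (W $$ (i,l)))))"
      by (rule sum.cong[OF refl], rule sum.swap)
    finally show ?thesis .
  qed
  also have "\<dots> = (\<Sum>l<n. \<Sum>k<n. a $ k * cnj (b $ l) * (if l = k then 1 else 0))"
  proof (intro sum.cong refl)
    fix l k assume "l \<in> {..<n}" "k \<in> {..<n}"
    thus "(\<Sum>i<n. a $ k * (cnj (b $ l) * (W $$ (i,k) * cnj (W $$ (i,l))))) = a $ k * cnj (b $ l) * (if l = k then 1 else 0)"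
      using I[of k l] by (simp add: mult.assoc flip: sum_distrib_left)
  qed
  also have "\<dots> = (\<Sum>l<n. a $ l * cnj (b $ l))"
    by (rule sum.cong[OF refl]) (simp add: if_distrib cong: if_cong)
  also have "\<dots> = a \<bullet>c b" unfolding cscalar_sum using b by simp
  finally show ?thesis .
qed

lemma s2: "Suc (Suc 0) = 2" by simp
lemma s3: "Suc (Suc (Suc 0)) = 3" by simp

definition mtx :: "complex vec \<Rightarrow> complex mat" where "mtx v = mat 2 2 (\<lambda>(i,j). v $ (2*i+j))"

lemma kron_dim[simp]: "dim_row (kron A B) = dim_row A * dim_row B" "dim_col (kron A B) = dim_col A * dim_col B"
  unfolding kron_def by auto

lemma kron_carrier[simp]: "A \<in> carrier_mat 2 2 \<Longrightarrow> B \<in> carrier_mat 2 2 \<Longrightarrow> kron A B \<in> carrier_mat 4 4"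
  unfolding kron_def by (intro carrier_matI) auto

lemma kron_index: "A \<in> carrier_mat 2 2 \<Longrightarrow> B \<in> carrier_mat 2 2 \<Longrightarrow> i < 4 \<Longrightarrow> j < 4 \<Longrightarrow>
  kron A B $$ (i,j) = A $$ (i div 2, j div 2) * B $$ (i mod 2, j mod 2)"
  unfolding kron_def by auto

lemma kron_vec: assumes A: "A \<in> carrier_mat 2 2" and B: "B \<in> carrier_mat 2 2" and v: "v \<in> carrier_vec 4"
  shows "kron A B *\<^sub>v v = vec 4 (\<lambda>i. (A * mtx v * transpose_mat B) $$ (i div 2, i mod 2))"
proof (rule eq_vecI)
  fix i assume "i < dim_vec (vec 4 (\<lambda>i. (A * mtx v * transpose_mat B) $$ (i div 2, i mod 2)))"
  hence i: "i < 4" by simp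
  have "(kron A B *\<^sub>v v) $ i = (\<Sum>k<4. kron A B $$ (i,k) * v $ k)"
    by (rule mult_mat_vec_index'[OF kron_carrier[OF A B] v i])
  also have "\<dots> = (\<Sum>k<4. A $$ (i div 2, k div 2) * B $$ (i mod 2, k mod 2) * v $ k)"
    by (rule sum.cong) (auto simp: kron_index[OF A B i])
  also have "\<dots> = (A * mtx v * transpose_mat B) $$ (i div 2, i mod 2)"
    using A B i unfolding less4
    by (elim disjE) (simp_all add: sum4 sum2' scalar_prod_def mtx_def algebra_simps s2 s3)
  finally show "(kron A B *\<^sub>v v) $ i = vec 4 (\<lambda>i. (A * mtx v * transpose_mat B) $$ (i div 2, i mod 2)) $ i"
    using i by simp
qed (use A B in auto)

lemma kron_adj: assumes A: "A \<in> carrier_mat 2 2" and B: "B \<in> carrier_mat 2 2"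
  shows "mat_adjoint (kron A B) = kron (mat_adjoint A) (mat_adjoint B)"
proof (rule eq_matI)
  fix i j assume "i < dim_row (kron (mat_adjoint A) (mat_adjoint B))" "j < dim_col (kron (mat_adjoint A) (mat_adjoint B))"
  hence i: "i < 4" and j: "j < 4" using A B by (auto simp: kron_def)
  show "mat_adjoint (kron A B) $$ (i,j) = kron (mat_adjoint A) (mat_adjoint B) $$ (i,j)"
    using A B i j carrier_matD[OF kron_carrier[OF A B]] by (simp add: kron_index adj_carrier less_mult_imp_div_less)
qed (use A B in \<open>auto simp: kron_def\<close>)

lemma kron_mixed: assumes A: "A \<in> carrier_mat 2 2" and B: "B \<in> carrier_mat 2 2"
  and C: "C \<in> carrier_mat 2 2" and D: "D \<in> carrier_mat 2 2"
  shows "kron (A * B) (C * D) = kron A C * kron B D"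
proof (rule eq_matI)
  fix i j assume "i < dim_row (kron A C * kron B D)" "j < dim_col (kron A C * kron B D)"
  hence i: "i < 4" and j: "j < 4" using carrier_matD[OF kron_carrier[OF A C]] carrier_matD[OF kron_carrier[OF B D]] by auto
  have "(kron A C * kron B D) $$ (i,j) = (\<Sum>k<4. kron A C $$ (i,k) * kron B D $$ (k,j))"
    using A B C D i j by (simp add: scalar_prod_def atLeast0LessThan)
  also have "\<dots> = (\<Sum>k<4. A $$ (i div 2, k div 2) * C $$ (i mod 2, k mod 2) * (B $$ (k div 2, j div 2) * D $$ (k mod 2, j mod 2)))"
    by (rule sum.cong) (auto simp: kron_index A B C D i j)
  also have "\<dots> = kron (A * B) (C * D) $$ (i,j)"
    using A B C D i j unfolding less4
    by (elim disjE; elim disjE) (simp_all add: kron_index sum4 sum2' scalar_prod_def algebra_simps)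
  finally show "kron (A * B) (C * D) $$ (i,j) = (kron A C * kron B D) $$ (i,j)" by simp
qed (use A B C D in auto)

lemma kron_one: "kron (1\<^sub>m 2) (1\<^sub>m 2) = 1\<^sub>m 4"
proof (rule eq_matI)
  fix i j assume "i < dim_row (1\<^sub>m 4 :: complex mat)" "j < dim_col (1\<^sub>m 4 :: complex mat)"
  hence i: "i < 4" and j: "j < 4" by auto
  show "kron (1\<^sub>m 2) (1\<^sub>m 2) $$ (i,j) = 1\<^sub>m 4 $$ (i,j)"
    using i j unfolding less4 by (elim disjE) (simp_all add: kron_index)
qed (auto simp: kron_def)

lemma kron_unitary: assumes A: "A \<in> carrier_mat 2 2" and B: "B \<in> carrier_mat 2 2"
  and AA: "mat_adjoint A * A = 1\<^sub>m 2" and BB: "mat_adjoint B * B = 1\<^sub>m 2"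
  shows "mat_adjoint (kron A B) * kron A B = 1\<^sub>m 4"
  unfolding kron_adj[OF A B] kron_mixed[OF adj_carrier[OF A] A adj_carrier[OF B] B, symmetric] AA BB kron_one ..

definition m2 :: "complex \<Rightarrow> complex \<Rightarrow> complex \<Rightarrow> complex \<Rightarrow> complex mat" where
  "m2 a b c d = mat 2 2 (\<lambda>(i,j). if i = 0 then (if j = 0 then a else b) else (if j = 0 then c else d))"

lemma m2_carrier[simp]: "m2 a b c d \<in> carrier_mat 2 2" by (simp add: m2_def)
lemma m2_dim[simp]: "dim_row (m2 a b c d) = 2" "dim_col (m2 a b c d) = 2" by (simp_all add: m2_def)
lemma m2_index[simp]: "m2 a b c d $$ (0,0) = a" "m2 a b c d $$ (0,1) = b" "m2 a b c d $$ (1,0) = c" "m2 a b c d $$ (1,1) = d"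
  by (simp_all add: m2_def)

lemma m2_index'[simp]: "m2 a b c d $$ (0,Suc 0) = b" "m2 a b c d $$ (Suc 0,0) = c" "m2 a b c d $$ (Suc 0,Suc 0) = d"
  by (simp_all add: m2_def)

lemma m2_eq: "A \<in> carrier_mat 2 2 \<Longrightarrow> A = m2 (A $$ (0,0)) (A $$ (0,1)) (A $$ (1,0)) (A $$ (1,1))"
  by (rule eq_matI) (auto simp: m2_def less2)

lemma m2_mult: "m2 a b c d * m2 a' b' c' d' = m2 (a*a' + b*c') (a*b' + b*d') (c*a' + d*c') (c*b' + d*d')"
  by (rule eq_matI) (auto simp: m2_def less2 scalar_prod_def sum2')

lemma m2_adj: "mat_adjoint (m2 a b c d) = m2 (cnj a) (cnj c) (cnj b) (cnj d)"
  by (rule eq_matI) (auto simp: m2_def less2)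

lemma m2_transpose: "transpose_mat (m2 a b c d) = m2 a c b d"
  by (rule eq_matI) (auto simp: m2_def less2)

lemma m2_one: "1\<^sub>m 2 = m2 1 0 0 1"
  by (rule eq_matI) (auto simp: m2_def less2)

lemma m2_eq_iff: "m2 a b c d = m2 a' b' c' d' \<longleftrightarrow> a = a' \<and> b = b' \<and> c = c' \<and> d = d'"
  by (metis m2_index)

lemma unitary_mult: fixes A B :: "complex mat"
  assumes A: "A \<in> carrier_mat n n" and B: "B \<in> carrier_mat n n"
    and AA: "mat_adjoint A * A = 1\<^sub>m n" and BB: "mat_adjoint B * B = 1\<^sub>m n"
  shows "mat_adjoint (A * B) * (A * B) = 1\<^sub>m n"
proof -
  have aA: "mat_adjoint A \<in> carrier_mat n n" and aB: "mat_adjoint B \<in> carrier_mat n n" using A B by auto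
  have "mat_adjoint (A * B) * (A * B) = mat_adjoint B * (mat_adjoint A * A) * B"
    unfolding adj_mult[OF A B] using A B aA aB
    by (simp add: assoc_mult_mat[of _ n n _ n _ n] mult_sq)
  also have "\<dots> = 1\<^sub>m n" unfolding AA using B BB aB by simp
  finally show ?thesis .
qed

lemma kron_vec_m2: assumes v: "v \<in> carrier_vec 4"
  and e: "A * mtx v * transpose_mat B = m2 p q r s"
  and A: "A \<in> carrier_mat 2 2" and B: "B \<in> carrier_mat 2 2"
  shows "kron A B *\<^sub>v v = vec 4 (\<lambda>i. if i = 0 then p else if i = 1 then q else if i = 2 then r else s)"
  unfolding kron_vec[OF A B v] e
  by (rule eq_vecI) (auto simp: less4)

lemma mtx_carrier[simp]: "mtx v \<in> carrier_mat 2 2" by (simp add: mtx_def)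

lemma cnj_of_real_mult: "cnj (complex_of_real a) = complex_of_real a" by simp

lemma schmidt:
  assumes v: "v \<in> carrier_vec 4" and nv: "v \<bullet>c v = 1"
  shows "\<exists>UA UB (\<theta>::real). UA \<in> carrier_mat 2 2 \<and> UB \<in> carrier_mat 2 2 \<and>
     mat_adjoint UA * UA = 1\<^sub>m 2 \<and> mat_adjoint UB * UB = 1\<^sub>m 2 \<and> 0 \<le> \<theta> \<and> \<theta> \<le> pi/2 \<and>
     kron UA UB *\<^sub>v v = vec 4 (\<lambda>i. if i = 0 then complex_of_real (cos \<theta>) else if i = 1 then 0
        else if i = 2 then 0 else complex_of_real (sin \<theta>))"
proof -
  define M where "M = mtx v"
  have Mc: "M \<in> carrier_mat 2 2" unfolding M_def by simp
  have aM: "mat_adjoint M \<in> carrier_mat 2 2" using Mc by simp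
  define H where "H = M * mat_adjoint M"
  have Hc: "H \<in> carrier_mat 2 2" unfolding H_def using Mc aM by (simp add: mult_sq)
  have Hh: "mat_adjoint H = H" unfolding H_def using Mc by (simp add: adj_mult[OF Mc aM])
  obtain X Dg where X: "X \<in> carrier_mat 2 2" and Dg: "Dg \<in> carrier_mat 2 2" and XX: "mat_adjoint X * X = 1\<^sub>m 2"
    and dDg: "diagonal_mat Dg" and He: "H = X * Dg * mat_adjoint X"
    using spectral[OF Hc Hh] by blast
  have aX: "mat_adjoint X \<in> carrier_mat 2 2" using X by simp
  have XX': "X * mat_adjoint X = 1\<^sub>m 2" using mat_mult_left_right_inverse[OF aX X XX] .
  define K where "K = mat_adjoint X * M"
  have Kc: "K \<in> carrier_mat 2 2" unfolding K_def using aX Mc by (simp add: mult_sq)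
  have KK: "K * mat_adjoint K = Dg"
  proof -
    have "K * mat_adjoint K = mat_adjoint X * H * X"
      unfolding K_def H_def adj_mult[OF aX Mc] adj_adj using X Mc aX aM
      by (simp add: assoc_mult_mat[of _ 2 2 _ 2 _ 2] mult_sq)
    also have "\<dots> = (mat_adjoint X * X) * Dg * (mat_adjoint X * X)"
      unfolding He using X Dg aX by (simp add: assoc_mult_mat[of _ 2 2 _ 2 _ 2] mult_sq)
    also have "\<dots> = Dg" unfolding XX using Dg by simp
    finally show ?thesis .
  qed
  define x0 where "x0 = K $$ (0,0)"
  define y0 where "y0 = K $$ (0,1)"
  define z0 where "z0 = K $$ (1,0)"
  define w0 where "w0 = K $$ (1,1)"
  have Ke: "K = m2 x0 y0 z0 w0" unfolding x0_def y0_def z0_def w0_def by (rule m2_eq[OF Kc])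
  have orth0: "x0 * cnj z0 + y0 * cnj w0 = 0"
  proof -
    have "(K * mat_adjoint K) $$ (0,1) = 0" using KK dDg Dg unfolding diagonal_mat_def by auto
    thus ?thesis unfolding Ke m2_adj m2_mult by simp
  qed
  have Me: "M = X * K"
  proof -
    have "X * K = (X * mat_adjoint X) * M" unfolding K_def by (rule assoc_mult_mat[OF X aX Mc, symmetric])
    thus ?thesis unfolding XX' using Mc by simp
  qed
  have Knz: "\<not> (x0 = 0 \<and> y0 = 0 \<and> z0 = 0 \<and> w0 = 0)"
  proof
    assume "x0 = 0 \<and> y0 = 0 \<and> z0 = 0 \<and> w0 = 0"
    hence "K = 0\<^sub>m 2 2" unfolding Ke by (auto simp: m2_def intro!: eq_matI)
    hence "M = 0\<^sub>m 2 2" using Me X by simp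
    hence vz: "\<And>i j. i < 2 \<Longrightarrow> j < 2 \<Longrightarrow> v $ (2*i+j) = 0"
      unfolding M_def mtx_def by (metis (no_types, lifting) case_prod_conv index_mat(1) index_zero_mat(1))
    have "v $ 0 = 0" "v $ 1 = 0" "v $ 2 = 0" "v $ 3 = 0"
      using vz[of 0 0] vz[of 0 1] vz[of 1 0] vz[of 1 1] by simp_all
    hence "v \<bullet>c v = 0" unfolding cscalar_sum using v by (simp add: sum4)
    thus False using nv by simp
  qed
  define sw where "sw = (x0 = 0 \<and> y0 = 0)"
  define x where "x = (if sw then z0 else x0)"
  define y where "y = (if sw then w0 else y0)"
  define z where "z = (if sw then x0 else z0)"
  define w where "w = (if sw then y0 else w0)"
  define S where "S = (if sw then m2 0 1 1 0 else m2 1 0 0 1)"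
  have SK: "S * K = m2 x y z w" unfolding S_def Ke x_def y_def z_def w_def by (simp add: m2_mult)
  have orth: "x * cnj z + y * cnj w = 0" unfolding x_def y_def z_def w_def using orth0 sw_def by auto
  have orth': "z * cnj x + w * cnj y = 0"
  proof -
    have "cnj (x * cnj z + y * cnj w) = 0" using orth by simp
    thus ?thesis by (simp add: mult.commute)
  qed
  have xy: "x \<noteq> 0 \<or> y \<noteq> 0" unfolding x_def y_def using Knz sw_def by auto
  define n2 where "n2 = (cmod x)^2 + (cmod y)^2"
  have n2pos: "n2 > 0" unfolding n2_def using xy by (auto simp: add_pos_nonneg add_nonneg_pos)
  define \<rho> where "\<rho> = sqrt n2"
  have \<rho>pos: "\<rho> > 0" unfolding \<rho>_def using n2pos by simp
  define r where "r = complex_of_real \<rho>"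
  have rnz: "r \<noteq> 0" unfolding r_def using \<rho>pos by simp
  have cr: "cnj r = r" unfolding r_def by simp
  have rr: "r * r = x * cnj x + y * cnj y"
  proof -
    have "\<rho> * \<rho> = n2" unfolding \<rho>_def using n2pos by simp
    hence "r * r = complex_of_real n2" unfolding r_def by (metis of_real_mult)
    also have "\<dots> = x * cnj x + y * cnj y" unfolding n2_def by (simp only: of_real_add complex_norm_square)
    finally show ?thesis .
  qed
  define \<delta> where "\<delta> = x * w - y * z"
  define ph where "ph = (if \<delta> = 0 then 1 else cnj \<delta> / complex_of_real (cmod \<delta>))"
  have phu: "cnj ph * ph = 1"
  proof (cases "\<delta> = 0")
    case False
    have "cnj ph * ph = (\<delta> * cnj \<delta>) / (complex_of_real (cmod \<delta>) * complex_of_real (cmod \<delta>))"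
      unfolding ph_def using False by (simp add: field_simps)
    also have "\<delta> * cnj \<delta> = complex_of_real (cmod \<delta>) * complex_of_real (cmod \<delta>)"
      by (simp flip: complex_norm_square of_real_mult add: power2_eq_square)
    finally show ?thesis using False by simp
  qed (simp add: ph_def)
  have phd: "ph * \<delta> = complex_of_real (cmod \<delta>)"
  proof (cases "\<delta> = 0")
    case False
    have "ph * \<delta> = (\<delta> * cnj \<delta>) / complex_of_real (cmod \<delta>)"
      unfolding ph_def using False by (simp add: field_simps)
    also have "\<delta> * cnj \<delta> = complex_of_real (cmod \<delta>) * complex_of_real (cmod \<delta>)"
      by (simp flip: complex_norm_square of_real_mult add: power2_eq_square)
    finally show ?thesis using False by simp
  qed (simp add: ph_def)
  define C where "C = m2 (cnj x / r) (- y / r) (cnj y / r) (x / r)"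
  define P where "P = m2 1 0 0 ph"
  define UA where "UA = P * S * mat_adjoint X"
  define UB where "UB = transpose_mat C"
  have Sc: "S \<in> carrier_mat 2 2" unfolding S_def by simp
  have UAc: "UA \<in> carrier_mat 2 2" unfolding UA_def P_def using Sc aX by (simp add: mult_sq)
  have UBc: "UB \<in> carrier_mat 2 2" unfolding UB_def C_def by (simp add: m2_transpose)
  have SS: "mat_adjoint S * S = 1\<^sub>m 2" unfolding S_def m2_one by (simp add: m2_adj m2_mult)
  have PP: "mat_adjoint P * P = 1\<^sub>m 2" unfolding P_def m2_one using phu by (simp add: m2_adj m2_mult)
  have aXX: "mat_adjoint (mat_adjoint X) * mat_adjoint X = 1\<^sub>m 2" using XX' by simp
  have UAU: "mat_adjoint UA * UA = 1\<^sub>m 2" unfolding UA_def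
    by (rule unitary_mult[OF mult_sq[OF _ Sc] aX unitary_mult[OF _ Sc PP SS] aXX]) (simp_all add: P_def)
  have UBU: "mat_adjoint UB * UB = 1\<^sub>m 2"
  proof -
    have e1: "cnj (cnj x / r) * (cnj x / r) + cnj (cnj y / r) * (cnj y / r) = 1"
    proof -
      have "cnj (cnj x / r) * (cnj x / r) + cnj (cnj y / r) * (cnj y / r) = (x * cnj x + y * cnj y) / (r * r)"
        using cr rnz by (simp add: add_divide_distrib)
      thus ?thesis using rnz by (simp flip: rr)
    qed
    have e2: "cnj (cnj x / r) * (- y / r) + cnj (cnj y / r) * (x / r) = 0"
      using rnz cr by (simp add: field_simps)
    have e3: "cnj (- y / r) * (cnj x / r) + cnj (x / r) * (cnj y / r) = 0"
      using rnz cr by (simp add: field_simps)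
    have e4: "cnj (- y / r) * (- y / r) + cnj (x / r) * (x / r) = 1"
    proof -
      have "cnj (- y / r) * (- y / r) + cnj (x / r) * (x / r) = (x * cnj x + y * cnj y) / (r * r)"
        using cr rnz by (simp add: add_divide_distrib algebra_simps)
      thus ?thesis using rnz by (simp flip: rr)
    qed
    show ?thesis unfolding UB_def C_def m2_transpose m2_adj m2_mult m2_one m2_eq_iff
      using e1 e2 e3 e4 by (simp add: ac_simps)
  qed
  have key: "UA * M * transpose_mat UB = m2 r 0 0 (complex_of_real (cmod \<delta> / \<rho>))"
  proof -
    have "UA * M * transpose_mat UB = P * (S * K) * C"
      unfolding UA_def UB_def K_def transpose_transpose using Sc aX Mc
      by (simp add: assoc_mult_mat[of _ 2 2 _ 2 _ 2] mult_sq P_def C_def)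
    also have "\<dots> = m2 (x * (cnj x / r) + y * (cnj y / r)) (x * (- y / r) + y * (x / r))
        (ph * z * (cnj x / r) + ph * w * (cnj y / r)) (ph * z * (- y / r) + ph * w * (x / r))"
      unfolding SK P_def C_def m2_mult by simp
    also have "\<dots> = m2 r 0 0 (complex_of_real (cmod \<delta> / \<rho>))"
    proof -
      have f1: "x * (cnj x / r) + y * (cnj y / r) = r"
      proof -
        have "x * (cnj x / r) + y * (cnj y / r) = (x * cnj x + y * cnj y) / r" by (simp add: add_divide_distrib)
        thus ?thesis using rr rnz by (metis nonzero_mult_div_cancel_right)
      qed
      have f2: "x * (- y / r) + y * (x / r) = 0" by (simp add: field_simps)
      have f3: "ph * z * (cnj x / r) + ph * w * (cnj y / r) = 0"
      proof -
        have "ph * z * (cnj x / r) + ph * w * (cnj y / r) = (ph / r) * (z * cnj x + w * cnj y)"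
          using rnz by (simp add: field_simps)
        thus ?thesis using orth' by simp
      qed
      have f4: "ph * z * (- y / r) + ph * w * (x / r) = complex_of_real (cmod \<delta> / \<rho>)"
      proof -
        have "ph * z * (- y / r) + ph * w * (x / r) = ph * \<delta> / r" unfolding \<delta>_def using rnz
          by (simp add: field_simps)
        also have "\<dots> = complex_of_real (cmod \<delta>) / complex_of_real \<rho>" unfolding phd r_def ..
        finally show ?thesis by simp
      qed
      show ?thesis unfolding f1 f2 f3 f4 ..
    qed
    finally show ?thesis .
  qed
  have wv: "kron UA UB *\<^sub>v v = vec 4 (\<lambda>i. if i = 0 then r else if i = 1 then 0 else if i = 2 then 0
       else complex_of_real (cmod \<delta> / \<rho>))"
    using kron_vec_m2[OF v key[unfolded M_def] UAc UBc] .
  have "(kron UA UB *\<^sub>v v) \<bullet>c (kron UA UB *\<^sub>v v) = v \<bullet>c v"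
    by (rule unitary_inner[OF kron_carrier[OF UAc UBc] kron_unitary[OF UAc UBc UAU UBU] v v])
  hence "(kron UA UB *\<^sub>v v) \<bullet>c (kron UA UB *\<^sub>v v) = 1" using nv by simp
  hence "r * cnj r + complex_of_real (cmod \<delta> / \<rho>) * cnj (complex_of_real (cmod \<delta> / \<rho>)) = 1"
    unfolding wv cscalar_sum by (simp add: sum4)
  hence "complex_of_real (\<rho>^2 + (cmod \<delta> / \<rho>)^2) = 1"
    unfolding r_def by (simp add: power2_eq_square)
  hence norm1: "\<rho>^2 + (cmod \<delta> / \<rho>)^2 = 1" by (metis of_real_eq_1_iff)
  obtain \<theta> where th: "0 \<le> \<theta>" "\<theta> \<le> pi/2" "\<rho> = cos \<theta>" "cmod \<delta> / \<rho> = sin \<theta>"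
    using sincos_total_pi_half[OF less_imp_le[OF \<rho>pos] _ norm1] \<rho>pos by auto
  show ?thesis
    by (rule exI[of _ UA], rule exI[of _ UB], rule exI[of _ \<theta>])
       (use UAc UBc UAU UBU th wv r_def in auto)
qed

definition v4 :: "complex \<Rightarrow> complex \<Rightarrow> complex \<Rightarrow> complex \<Rightarrow> complex vec" where
  "v4 a b c d = vec 4 (\<lambda>i. if i = 0 then a else if i = 1 then b else if i = 2 then c else d)"

lemma v4_carrier[simp]: "v4 a b c d \<in> carrier_vec 4" by (simp add: v4_def)
lemma v4_dim[simp]: "dim_vec (v4 a b c d) = 4" by (simp add: v4_def)
lemma v4_index[simp]: "v4 a b c d $ 0 = a" "v4 a b c d $ 1 = b" "v4 a b c d $ 2 = c" "v4 a b c d $ 3 = d"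
  by (simp_all add: v4_def)

lemma v4_eq: "w \<in> carrier_vec 4 \<Longrightarrow> w = v4 (w $ 0) (w $ 1) (w $ 2) (w $ 3)"
  by (rule eq_vecI) (auto simp: v4_def less4)

lemma v4_smult: "c \<cdot>\<^sub>v v4 a b d e = v4 (c * a) (c * b) (c * d) (c * e)"
  by (rule eq_vecI) (auto simp: v4_def less4)

lemma mtx_v4: "mtx (v4 a b c d) = m2 a b c d"
  by (rule eq_matI) (auto simp: mtx_def m2_def less2 v4_def)

lemma kron_v4: assumes "A * m2 a b c d * transpose_mat B = m2 p q r s"
  and "A \<in> carrier_mat 2 2" "B \<in> carrier_mat 2 2"
  shows "kron A B *\<^sub>v v4 a b c d = v4 p q r s"
proof -
  have e: "A * mtx (v4 a b c d) * transpose_mat B = m2 p q r s" unfolding mtx_v4 by (rule assms(1))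
  show ?thesis using kron_vec_m2[OF v4_carrier e assms(2,3)] by (simp only: v4_def[of p q r s])
qed

lemma ket_psi1: "complex_of_real (cos t) \<cdot>\<^sub>v ket2 0 0 + complex_of_real (sin t) \<cdot>\<^sub>v ket2 1 1
   = v4 (complex_of_real (cos t)) 0 0 (complex_of_real (sin t))"
  by (rule eq_vecI) (auto simp: v4_def ket2_def less4)

lemma ket_psi2: "complex_of_real (cos p) \<cdot>\<^sub>v
                 (complex_of_real (cos a) \<cdot>\<^sub>v ket2 0 1 + complex_of_real (sin a) \<cdot>\<^sub>v ket2 1 0)
             + (e * complex_of_real (sin p)) \<cdot>\<^sub>v
                 (complex_of_real (sin t) \<cdot>\<^sub>v ket2 0 0 - complex_of_real (cos t) \<cdot>\<^sub>v ket2 1 1)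
   = v4 (e * complex_of_real (sin p) * complex_of_real (sin t))
        (complex_of_real (cos p) * complex_of_real (cos a))
        (complex_of_real (cos p) * complex_of_real (sin a))
        (- e * complex_of_real (sin p) * complex_of_real (cos t))"
  by (rule eq_vecI) (auto simp: v4_def ket2_def less4)

lemma conj_combo: fixes W :: "complex mat"
  assumes W: "W \<in> carrier_mat n n" and v1: "v1 \<in> carrier_vec n" and v2: "v2 \<in> carrier_vec n"
  shows "W * (a \<cdot>\<^sub>m proj v1 + b \<cdot>\<^sub>m proj v2) * mat_adjoint W = a \<cdot>\<^sub>m proj (W *\<^sub>v v1) + b \<cdot>\<^sub>m proj (W *\<^sub>v v2)"
proof -
  have p1: "proj v1 \<in> carrier_mat n n" and p2: "proj v2 \<in> carrier_mat n n" using v1 v2 by auto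
  have aW: "mat_adjoint W \<in> carrier_mat n n" using W by simp
  have "W * (a \<cdot>\<^sub>m proj v1 + b \<cdot>\<^sub>m proj v2) = a \<cdot>\<^sub>m (W * proj v1) + b \<cdot>\<^sub>m (W * proj v2)"
    using W p1 p2 by (simp add: mult_add_distrib_mat[OF W, of _ n] mult_smult_distrib)
  hence "W * (a \<cdot>\<^sub>m proj v1 + b \<cdot>\<^sub>m proj v2) * mat_adjoint W
     = a \<cdot>\<^sub>m (W * proj v1 * mat_adjoint W) + b \<cdot>\<^sub>m (W * proj v2 * mat_adjoint W)"
    using W p1 p2 aW by (simp add: add_mult_distrib_mat[of _ n n _ "mat_adjoint W" n] mult_smult_assoc_mat[OF mult_sq[OF W p1] aW] mult_smult_assoc_mat[OF mult_sq[OF W p2] aW] mult_sq)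
  thus ?thesis using conj_proj[OF W v1] conj_proj[OF W v2] by simp
qed

lemma phase_of: "\<exists>z. cnj z * z = 1 \<and> cnj z * a = complex_of_real (cmod a)"
proof (cases "a = 0")
  case True thus ?thesis by (intro exI[of _ 1]) simp
next
  case False
  define z where "z = a / complex_of_real (cmod a)"
  have aa: "a * cnj a = complex_of_real (cmod a) * complex_of_real (cmod a)"
    by (simp flip: complex_norm_square of_real_mult add: power2_eq_square)
  have "cnj z * z = (a * cnj a) / (complex_of_real (cmod a) * complex_of_real (cmod a))"
    unfolding z_def by (simp add: field_simps)
  hence 1: "cnj z * z = 1" unfolding aa using False by simp
  have "cnj z * a = (a * cnj a) / complex_of_real (cmod a)"
    unfolding z_def by (simp add: field_simps)
  hence 2: "cnj z * a = complex_of_real (cmod a)" unfolding aa using False by simp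
  show ?thesis using 1 2 by blast
qed

lemma unit_cmod: "cnj z * z = 1 \<longleftrightarrow> cmod z = 1"
proof -
  have "cnj z * z = complex_of_real ((cmod z)^2)" by (simp only: complex_norm_square mult.commute)
  hence "cnj z * z = 1 \<longleftrightarrow> (cmod z)^2 = 1" by (metis of_real_eq_1_iff)
  also have "\<dots> \<longleftrightarrow> cmod z = 1" using norm_ge_zero[of z] power2_eq_1_iff[of "cmod z"] by linarith
  finally show ?thesis .
qed

lemma exp_phase: assumes "Re u = cos b" "Im u = sin b"
  shows "exp (\<i> * complex_of_real b) = u"
  using assms by (simp add: cis_conv_exp[symmetric] complex_eq_iff)

lemma smult_one_m: "(1::complex) \<cdot>\<^sub>m A = A" by (rule eq_matI) auto

lemma v4_index_Suc[simp]: "v4 a b c d $ Suc 0 = b" by (simp add: v4_def)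

theorem mainTheorem1:
  fixes \<sigma> :: "complex mat"
  assumes "density_mat 4 \<sigma>"
    and "vec_space.rank 4 \<sigma> \<le> 2"
  shows "\<exists>UA UB (\<theta>::real) (\<phi>::real) (\<alpha>::real) (\<beta>::real) (\<nu>1::real) (\<nu>2::real).
    unitary_mat 2 UA \<and> unitary_mat 2 UB \<and>
    \<theta> \<in> {0..pi/2} \<and> \<phi> \<in> {0..pi/2} \<and> \<alpha> \<in> {0..pi/2} \<and> \<beta> \<in> {0..2*pi} \<and>
    \<nu>1 \<in> {0..1} \<and> \<nu>2 \<in> {0..1} \<and> \<nu>1 + \<nu>2 = 1 \<and>
    (let \<psi>1 = complex_of_real (cos \<theta>) \<cdot>\<^sub>v ket2 0 0 + complex_of_real (sin \<theta>) \<cdot>\<^sub>v ket2 1 1;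
         \<psi>2 = complex_of_real (cos \<phi>) \<cdot>\<^sub>v
                 (complex_of_real (cos \<alpha>) \<cdot>\<^sub>v ket2 0 1 + complex_of_real (sin \<alpha>) \<cdot>\<^sub>v ket2 1 0)
             + (exp (\<i> * complex_of_real \<beta>) * complex_of_real (sin \<phi>)) \<cdot>\<^sub>v
                 (complex_of_real (sin \<theta>) \<cdot>\<^sub>v ket2 0 0 - complex_of_real (cos \<theta>) \<cdot>\<^sub>v ket2 1 1)
     in kron UA UB * \<sigma> * mat_adjoint (kron UA UB)
        = complex_of_real \<nu>1 \<cdot>\<^sub>m proj \<psi>1 + complex_of_real \<nu>2 \<cdot>\<^sub>m proj \<psi>2)"
proof -
  obtain v1 v2 \<nu>1 \<nu>2 where v1: "v1 \<in> carrier_vec 4" and v2: "v2 \<in> carrier_vec 4"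
    and n1: "v1 \<bullet>c v1 = 1" and n2: "v2 \<bullet>c v2 = 1" and o12: "v2 \<bullet>c v1 = 0"
    and nu: "\<nu>1 \<ge> 0" "\<nu>2 \<ge> 0" "\<nu>1 + \<nu>2 = 1"
    and \<sigma>e: "\<sigma> = complex_of_real \<nu>1 \<cdot>\<^sub>m proj v1 + complex_of_real \<nu>2 \<cdot>\<^sub>m proj v2"
    using rank2_decomp[OF assms] by blast
  obtain UA UB \<theta> where UAc: "UA \<in> carrier_mat 2 2" and UBc: "UB \<in> carrier_mat 2 2"
    and UAU: "mat_adjoint UA * UA = 1\<^sub>m 2" and UBU: "mat_adjoint UB * UB = 1\<^sub>m 2"
    and th: "0 \<le> \<theta>" "\<theta> \<le> pi/2"
    and w1e: "kron UA UB *\<^sub>v v1 = vec 4 (\<lambda>i. if i = 0 then complex_of_real (cos \<theta>) else if i = 1 then 0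
        else if i = 2 then 0 else complex_of_real (sin \<theta>))"
    using schmidt[OF v1 n1] by blast
  define c where "c = complex_of_real (cos \<theta>)"
  define s where "s = complex_of_real (sin \<theta>)"
  have w1: "kron UA UB *\<^sub>v v1 = v4 c 0 0 s" using w1e unfolding v4_def c_def s_def .
  define K where "K = kron UA UB"
  have Kc: "K \<in> carrier_mat 4 4" unfolding K_def using UAc UBc by simp
  have KU: "mat_adjoint K * K = 1\<^sub>m 4" unfolding K_def by (rule kron_unitary[OF UAc UBc UAU UBU])
  define w2 where "w2 = K *\<^sub>v v2"
  have w2c: "w2 \<in> carrier_vec 4" unfolding w2_def using Kc v2 by simp
  have nw2: "w2 \<bullet>c w2 = 1" unfolding w2_def using unitary_inner[OF Kc KU v2 v2] n2 by simp
  have ow: "w2 \<bullet>c v4 c 0 0 s = 0" unfolding w2_def using unitary_inner[OF Kc KU v2 v1] o12 w1 K_def by simp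
  define a0 where "a0 = w2 $ 0"
  define a1 where "a1 = w2 $ 1"
  define a2 where "a2 = w2 $ 2"
  define a3 where "a3 = w2 $ 3"
  have w2e: "w2 = v4 a0 a1 a2 a3" unfolding a0_def a1_def a2_def a3_def by (rule v4_eq[OF w2c])
  have cc: "cnj c = c" "cnj s = s" unfolding c_def s_def by simp_all
  have orth: "a0 * c + a3 * s = 0" using ow unfolding w2e cscalar_sum by (simp add: sum4 cc)
  have cs: "s * s + c * c = 1"
  proof -
    have "s * s + c * c = complex_of_real ((sin \<theta>)^2 + (cos \<theta>)^2)"
      unfolding c_def s_def by (simp add: power2_eq_square)
    thus ?thesis by simp
  qed
  define \<gamma> where "\<gamma> = s * a0 - c * a3"
  have a0e: "a0 = \<gamma> * s"
  proof -
    have "\<gamma> * s - a0 = a0 * (s * s + c * c - 1) - c * (a0 * c + a3 * s)"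
      unfolding \<gamma>_def by (simp add: algebra_simps)
    thus ?thesis using cs orth by simp
  qed
  have a3e: "a3 = - \<gamma> * c"
  proof -
    have "- \<gamma> * c - a3 = a3 * (s * s + c * c - 1) - s * (a0 * c + a3 * s)"
      unfolding \<gamma>_def by (simp add: algebra_simps)
    thus ?thesis using cs orth by simp
  qed
  obtain z1 where z1: "cnj z1 * z1 = 1" "cnj z1 * a1 = complex_of_real (cmod a1)" using phase_of by blast
  obtain z2 where z2: "cnj z2 * z2 = 1" "cnj z2 * a2 = complex_of_real (cmod a2)" using phase_of by blast
  define \<eta> where "\<eta> = csqrt (z1 * cnj z2)"
  have \<eta>\<eta>: "\<eta> * \<eta> = z1 * cnj z2"
  proof -
    have "\<eta> * \<eta> = \<eta>^2" by (simp add: power2_eq_square)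
    thus ?thesis unfolding \<eta>_def by (simp only: power2_csqrt)
  qed
  have \<eta>u: "cnj \<eta> * \<eta> = 1"
  proof -
    have "cmod z1 = 1" "cmod z2 = 1" using z1(1) z2(1) unit_cmod by auto
    hence "cmod (\<eta> * \<eta>) = 1" unfolding \<eta>\<eta> by (simp add: norm_mult)
    hence "cmod \<eta> * cmod \<eta> = 1" by (simp add: norm_mult)
    hence "(cmod \<eta>)^2 = 1" by (simp add: power2_eq_square)
    hence "cmod \<eta> = 1" using norm_ge_zero[of \<eta>] power2_eq_1_iff[of "cmod \<eta>"] by linarith
    thus ?thesis using unit_cmod by blast
  qed
  define g where "g = cnj z1 * \<eta>"
  have gu: "cnj g * g = 1"
  proof -
    have "cnj g * g = (cnj z1 * z1) * (cnj \<eta> * \<eta>)" unfolding g_def by (simp add: algebra_simps)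
    thus ?thesis using z1(1) \<eta>u by simp
  qed
  define PA where "PA = m2 1 0 0 \<eta>"
  define PB where "PB = m2 1 0 0 (cnj \<eta>)"
  have PAU: "mat_adjoint PA * PA = 1\<^sub>m 2" unfolding PA_def m2_one using \<eta>u by (simp add: m2_adj m2_mult)
  have PBU: "mat_adjoint PB * PB = 1\<^sub>m 2" unfolding PB_def m2_one using \<eta>u by (simp add: m2_adj m2_mult mult.commute)
  have Pv: "kron PA PB *\<^sub>v v4 p q r t = v4 p (cnj \<eta> * q) (\<eta> * r) t" for p q r t
  proof (rule kron_v4)
    have e: "\<eta> * t * cnj \<eta> = t"
    proof -
      have "\<eta> * t * cnj \<eta> = t * (cnj \<eta> * \<eta>)" by (simp add: algebra_simps)
      thus ?thesis using \<eta>u by simp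
    qed
    have "PA * m2 p q r t * transpose_mat PB = m2 p (q * cnj \<eta>) (\<eta> * r) (\<eta> * t * cnj \<eta>)"
      unfolding PA_def PB_def m2_transpose m2_mult by simp
    also have "\<dots> = m2 p (cnj \<eta> * q) (\<eta> * r) t" unfolding e by (simp add: mult.commute)
    finally show "PA * m2 p q r t * transpose_mat PB = m2 p (cnj \<eta> * q) (\<eta> * r) t" .
  qed (simp_all add: PA_def PB_def)
  define UA' where "UA' = PA * UA"
  define UB' where "UB' = PB * UB"
  have UA'c: "UA' \<in> carrier_mat 2 2" unfolding UA'_def PA_def using UAc by (simp add: mult_sq)
  have UB'c: "UB' \<in> carrier_mat 2 2" unfolding UB'_def PB_def using UBc by (simp add: mult_sq)
  have UA'U: "mat_adjoint UA' * UA' = 1\<^sub>m 2" unfolding UA'_def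
    by (rule unitary_mult[OF _ UAc PAU UAU]) (simp add: PA_def)
  have UB'U: "mat_adjoint UB' * UB' = 1\<^sub>m 2" unfolding UB'_def
    by (rule unitary_mult[OF _ UBc PBU UBU]) (simp add: PB_def)
  define K' where "K' = kron UA' UB'"
  have K'c: "K' \<in> carrier_mat 4 4" unfolding K'_def using UA'c UB'c by simp
  have K'e: "K' = kron PA PB * K" unfolding K'_def UA'_def UB'_def K_def
    by (rule kron_mixed) (simp_all add: PA_def PB_def UAc UBc)
  have K'v1: "K' *\<^sub>v v1 = v4 c 0 0 s"
  proof -
    have "K' *\<^sub>v v1 = kron PA PB *\<^sub>v (K *\<^sub>v v1)" unfolding K'e
      by (rule assoc_mult_mat_vec[of _ 4 4 _ 4]) (use Kc v1 in \<open>simp_all add: PA_def PB_def\<close>)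
    also have "\<dots> = v4 c 0 0 s" unfolding K_def w1 Pv by simp
    finally show ?thesis .
  qed
  have K'v2: "K' *\<^sub>v v2 = v4 a0 (cnj \<eta> * a1) (\<eta> * a2) a3"
  proof -
    have "K' *\<^sub>v v2 = kron PA PB *\<^sub>v (K *\<^sub>v v2)" unfolding K'e
      by (rule assoc_mult_mat_vec[of _ 4 4 _ 4]) (use Kc v2 in \<open>simp_all add: PA_def PB_def\<close>)
    also have "\<dots> = v4 a0 (cnj \<eta> * a1) (\<eta> * a2) a3" unfolding w2_def[symmetric] w2e Pv ..
    finally show ?thesis .
  qed
  define \<epsilon> where "\<epsilon> = g * \<gamma>"
  have gv: "g \<cdot>\<^sub>v (K' *\<^sub>v v2) = v4 (\<epsilon> * s) (complex_of_real (cmod a1)) (complex_of_real (cmod a2)) (- \<epsilon> * c)"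
  proof -
    have 1: "g * a0 = \<epsilon> * s" unfolding \<epsilon>_def a0e by (simp add: mult.assoc)
    have 2: "g * (cnj \<eta> * a1) = complex_of_real (cmod a1)"
    proof -
      have "g * (cnj \<eta> * a1) = (cnj \<eta> * \<eta>) * (cnj z1 * a1)" unfolding g_def by (simp add: algebra_simps)
      thus ?thesis using \<eta>u z1(2) by simp
    qed
    have 3: "g * (\<eta> * a2) = complex_of_real (cmod a2)"
    proof -
      have "g * (\<eta> * a2) = cnj z1 * (\<eta> * \<eta>) * a2" unfolding g_def by (simp add: algebra_simps)
      also have "\<dots> = (cnj z1 * z1) * (cnj z2 * a2)" unfolding \<eta>\<eta> by (simp add: algebra_simps)
      finally show ?thesis using z1(1) z2(2) by simp
    qed
    have 4: "g * a3 = - \<epsilon> * c" unfolding \<epsilon>_def a3e by (simp add: algebra_simps)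
    show ?thesis unfolding K'v2 v4_smult 1 2 3 4 ..
  qed
  have cme: "cmod \<epsilon> = cmod \<gamma>"
  proof -
    have "cmod g = 1" using gu unit_cmod by blast
    thus ?thesis unfolding \<epsilon>_def by (simp add: norm_mult)
  qed
  have sum1: "(cmod a1)^2 + (cmod a2)^2 + (cmod \<gamma>)^2 = 1"
  proof -
    have "complex_of_real (vnorm2 w2) = 1" using nw2 cscalar_self[of w2] by simp
    hence "vnorm2 w2 = 1" by (metis of_real_eq_1_iff)
    hence "(cmod a0)^2 + (cmod a1)^2 + (cmod a2)^2 + (cmod a3)^2 = 1"
      unfolding vnorm2_def w2e by (simp add: sum4)
    moreover have "(cmod a0)^2 = (cmod \<gamma>)^2 * (sin \<theta>)^2" unfolding a0e s_def
      by (simp add: norm_mult power_mult_distrib)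
    moreover have "(cmod a3)^2 = (cmod \<gamma>)^2 * (cos \<theta>)^2" unfolding a3e c_def
      by (simp add: norm_mult power_mult_distrib)
    moreover have "(cmod \<gamma>)^2 * (sin \<theta>)^2 + (cmod \<gamma>)^2 * (cos \<theta>)^2 = (cmod \<gamma>)^2"
      by (simp flip: distrib_left)
    ultimately show ?thesis by linarith
  qed
  define X where "X = (cmod a1)^2 + (cmod a2)^2"
  have X0: "X \<ge> 0" unfolding X_def by simp
  have "(sqrt X)^2 + (cmod \<epsilon>)^2 = 1" using sum1 X0 cme unfolding X_def by simp
  then obtain \<phi> where ph: "0 \<le> \<phi>" "\<phi> \<le> pi/2" "sqrt X = cos \<phi>" "cmod \<epsilon> = sin \<phi>"
    using sincos_total_pi_half[of "sqrt X" "cmod \<epsilon>"] X0 by auto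
  obtain \<alpha> where al: "0 \<le> \<alpha>" "\<alpha> \<le> pi/2" "cos \<phi> * cos \<alpha> = cmod a1" "cos \<phi> * sin \<alpha> = cmod a2"
  proof (cases "X = 0")
    case True
    hence "cmod a1 = 0" "cmod a2 = 0" unfolding X_def
      by (simp_all add: add_nonneg_eq_0_iff)
    thus ?thesis using that[of 0] ph(3) True by simp
  next
    case False
    hence Xp: "X > 0" using X0 by simp
    have nn: "0 \<le> cmod a1 / sqrt X" "0 \<le> cmod a2 / sqrt X" using X0 by (simp_all add: divide_nonneg_nonneg)
    have sq: "(cmod a1 / sqrt X)^2 + (cmod a2 / sqrt X)^2 = 1"
      using Xp unfolding X_def by (auto simp: power_divide add_divide_distrib[symmetric])
    then obtain t where t: "0 \<le> t" "t \<le> pi/2" "cmod a1 / sqrt X = cos t" "cmod a2 / sqrt X = sin t"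
      using sincos_total_pi_half[OF nn sq] by blast
    have sp: "cos \<phi> \<noteq> 0" using Xp ph(3) by (metis real_sqrt_gt_zero less_irrefl)
    have e1: "cos \<phi> * cos t = cmod a1" using t(3) sp ph(3) by (metis nonzero_mult_div_cancel_left times_divide_eq_right)
    have e2: "cos \<phi> * sin t = cmod a2" using t(4) sp ph(3) by (metis nonzero_mult_div_cancel_left times_divide_eq_right)
    show ?thesis
      by (rule that[of t]) (use t e1 e2 in auto)
  qed
  obtain \<beta> where be: "0 \<le> \<beta>" "\<beta> \<le> 2 * pi" "exp (\<i> * complex_of_real \<beta>) * complex_of_real (cmod \<epsilon>) = \<epsilon>"
  proof (cases "\<epsilon> = 0")
    case True thus ?thesis using that[of 0] by simp
  next
    case False
    define u where "u = \<epsilon> / complex_of_real (cmod \<epsilon>)"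
    have "cmod u = 1" unfolding u_def using False by (simp add: norm_divide)
    hence "(Re u)^2 + (Im u)^2 = 1" by (simp add: cmod_def)
    then obtain b where b: "0 \<le> b" "b \<le> 2 * pi" "Re u = cos b" "Im u = sin b"
      using sincos_total_2pi_le by blast
    have "exp (\<i> * complex_of_real b) = u" by (rule exp_phase[OF b(3,4)])
    hence "exp (\<i> * complex_of_real b) * complex_of_real (cmod \<epsilon>) = \<epsilon>" unfolding u_def using False by simp
    thus ?thesis using that b(1,2) by blast
  qed
  define \<psi>1 where "\<psi>1 = complex_of_real (cos \<theta>) \<cdot>\<^sub>v ket2 0 0 + complex_of_real (sin \<theta>) \<cdot>\<^sub>v ket2 1 1"
  define \<psi>2 where "\<psi>2 = complex_of_real (cos \<phi>) \<cdot>\<^sub>v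
                 (complex_of_real (cos \<alpha>) \<cdot>\<^sub>v ket2 0 1 + complex_of_real (sin \<alpha>) \<cdot>\<^sub>v ket2 1 0)
             + (exp (\<i> * complex_of_real \<beta>) * complex_of_real (sin \<phi>)) \<cdot>\<^sub>v
                 (complex_of_real (sin \<theta>) \<cdot>\<^sub>v ket2 0 0 - complex_of_real (cos \<theta>) \<cdot>\<^sub>v ket2 1 1)"
  have \<psi>1e: "\<psi>1 = K' *\<^sub>v v1" unfolding \<psi>1_def ket_psi1 K'v1 c_def s_def ..
  have es: "exp (\<i> * complex_of_real \<beta>) * complex_of_real (sin \<phi>) = \<epsilon>" using be(3) ph(4) by simp
  have \<psi>2e: "\<psi>2 = g \<cdot>\<^sub>v (K' *\<^sub>v v2)"
  proof -
    have "\<psi>2 = v4 (\<epsilon> * s) (complex_of_real (cos \<phi> * cos \<alpha>)) (complex_of_real (cos \<phi> * sin \<alpha>)) (- \<epsilon> * c)"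
      unfolding \<psi>2_def ket_psi2 unfolding es c_def s_def by (simp add: es)
    thus ?thesis unfolding gv al(3,4) .
  qed
  have K'v2': "K' *\<^sub>v v2 = cnj g \<cdot>\<^sub>v \<psi>2"
  proof -
    have "cnj g \<cdot>\<^sub>v \<psi>2 = (cnj g * g) \<cdot>\<^sub>v (K' *\<^sub>v v2)" unfolding \<psi>2e by (simp add: smult_smult_assoc)
    thus ?thesis using gu by simp
  qed
  have fin: "K' * \<sigma> * mat_adjoint K' = complex_of_real \<nu>1 \<cdot>\<^sub>m proj \<psi>1 + complex_of_real \<nu>2 \<cdot>\<^sub>m proj \<psi>2"
  proof -
    have "K' * \<sigma> * mat_adjoint K' = complex_of_real \<nu>1 \<cdot>\<^sub>m proj (K' *\<^sub>v v1) + complex_of_real \<nu>2 \<cdot>\<^sub>m proj (K' *\<^sub>v v2)"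
      unfolding \<sigma>e by (rule conj_combo[OF K'c v1 v2])
    also have "proj (K' *\<^sub>v v2) = proj \<psi>2"
      unfolding K'v2' proj_smult using gu by (simp add: mult.commute smult_one_m)
    finally show ?thesis unfolding \<psi>1e .
  qed
  show ?thesis
    apply (rule exI[of _ UA'], rule exI[of _ UB'], rule exI[of _ \<theta>], rule exI[of _ \<phi>], rule exI[of _ \<alpha>],
        rule exI[of _ \<beta>], rule exI[of _ \<nu>1], rule exI[of _ \<nu>2])
    unfolding Let_def \<psi>1_def[symmetric] \<psi>2_def[symmetric] K'_def[symmetric] unitary_mat_def
    using UA'c UB'c UA'U UB'U th ph(1,2) al(1,2) be(1,2) nu fin by auto
qed

end
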